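(* For any $1\leq i<j\leq n$ and any subspace $L$ of $\bigwedge^{k}V$, we have $N_{j\to i}N_{j\to i}N_{j\to i}L=N_{j\to i}N_{j\to i}L$. Moreover, if $L$ is monomial with respect to $e_j$, i.e. $L=\big(L\cap\bigwedge^{k}V^{(j)}\big)\oplus\big(L\cap(e_{j}\wedge\bigwedge^{k-1}V^{(j)})\big)$, then $N_{j\to i}N_{j\to i}L=N_{j\to i}L$.
   Context: $\mathbb{F}$ is a field (assumed throughout the paper, for expository purposes, to have characteristic not $2$), $V$ is an $n$-dimensional $\mathbb{F}$-vector space with a fixed basis $e_1,\dots,e_n$, and $\bigwedge V$ its exterior algebra. For $j\in[n]$, $V^{(j)}$ is the span of $\{e_h:h\neq j\}$, and $\bigwedge V^{(j)}$ is viewed as a subalgebra of $\bigwedge V$. Slow shift: for distinct $i,j\in[n]$ and nonzero $m\in\bigwedge^kV$, write uniquely $m=x+e_j\wedge y$ with $x\in\bigwedge^kV^{(j)}$, $y\in\bigwedge^{k-1}V^{(j)}$, and set $N_{j\to i}m=x+e_i\wedge y$ if this is nonzero, and $N_{j\to i}m=e_j\wedge y$ otherwise (the limit as $t\to0$ of the projective action of the linear map $e_j\mapsto e_i+te_j$ fixing the other $e_h$). For a subspace $L$ of $\bigwedge^kV$, $N_{j\to i}L$ is the span of $\{N_{j\to i}m:m\in L\setminus\{0\}\}$; it has the same dimension as $L$. *)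

theory Defs
  imports Complex_Main "HOL-Library.Function_Algebras"
begin

text \<open>Elements of the exterior algebra of V = F^n with basis e_1..e_n are represented by
  their coefficient functions on the standard basis e_S (S a finite subset of {1..n},
  e_S = e_{s_1} \<and> ... \<and> e_{s_r} with s_1 < ... < s_r).\<close>

type_synonym 'a ext = "nat set \<Rightarrow> 'a"

definition ext_scale :: "'a::field \<Rightarrow> 'a ext \<Rightarrow> 'a ext" where
  "ext_scale c m = (\<lambda>S. c * m S)"

definition ext_span :: "('a::field) ext set \<Rightarrow> 'a ext set" where
  "ext_span X = module.span ext_scale X"

definition ext_subspace :: "('a::field) ext set \<Rightarrow> bool" where
  "ext_subspace L = module.subspace ext_scale L"

text \<open>The k-th exterior power of V, and of V^(j) = span {e_h : h \<noteq> j}.\<close>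
definition ext_pow :: "nat \<Rightarrow> nat \<Rightarrow> ('a::field) ext set" where
  "ext_pow n k = {m. \<forall>S. m S \<noteq> 0 \<longrightarrow> S \<subseteq> {1..n} \<and> card S = k}"

definition ext_pow_omit :: "nat \<Rightarrow> nat \<Rightarrow> nat \<Rightarrow> ('a::field) ext set" where
  "ext_pow_omit n j k = {m \<in> ext_pow n k. \<forall>S. j \<in> S \<longrightarrow> m S = 0}"

text \<open>Left multiplication by e_h: e_h \<and> e_T = (-1)^{#{t \<in> T. t < h}} e_{T \<union> {h}} if h \<notin> T,
  and 0 if h \<in> T.\<close>
definition wsign :: "nat \<Rightarrow> nat set \<Rightarrow> 'a::field" where
  "wsign h T = (if even (card {t \<in> T. t < h}) then 1 else -1)"

definition wedge_e :: "nat \<Rightarrow> ('a::field) ext \<Rightarrow> 'a ext" where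
  "wedge_e h y = (\<lambda>S. if h \<in> S then wsign h (S - {h}) * y (S - {h}) else 0)"

text \<open>The unique decomposition m = x + e_j \<and> y with x, y in the exterior algebra of V^(j).\<close>
definition dec_x :: "nat \<Rightarrow> ('a::field) ext \<Rightarrow> 'a ext" where
  "dec_x j m = (\<lambda>S. if j \<in> S then 0 else m S)"

definition dec_y :: "nat \<Rightarrow> ('a::field) ext \<Rightarrow> 'a ext" where
  "dec_y j m = (\<lambda>T. if j \<in> T then 0 else wsign j T * m (insert j T))"

lemma dec_correct: "m = dec_x j m + wedge_e j (dec_y j m)"
  by (rule ext) (auto simp: dec_x_def dec_y_def wedge_e_def wsign_def insert_absorb)

definition slow_shift :: "nat \<Rightarrow> nat \<Rightarrow> ('a::field) ext \<Rightarrow> 'a ext" where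
  "slow_shift j i m =
     (let v = dec_x j m + wedge_e i (dec_y j m)
      in if v \<noteq> 0 then v else wedge_e j (dec_y j m))"

definition slow_shift_sub :: "nat \<Rightarrow> nat \<Rightarrow> ('a::field) ext set \<Rightarrow> 'a ext set" where
  "slow_shift_sub j i L = ext_span {slow_shift j i m | m. m \<in> L \<and> m \<noteq> 0}"

definition monomial_wrt :: "nat \<Rightarrow> nat \<Rightarrow> nat \<Rightarrow> ('a::field) ext set \<Rightarrow> bool" where
  "monomial_wrt n k j L =
     (L = {a + b | a b. a \<in> L \<inter> ext_pow_omit n j k \<and>
                        b \<in> L \<inter> wedge_e j ` ext_pow_omit n j (k - 1)})"

end

theory Submission
  imports Defs
begin

interpretation E: module "ext_scale :: 'a::field \<Rightarrow> 'a ext \<Rightarrow> 'a ext"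
  by unfold_locales (auto simp: ext_scale_def algebra_simps)

definition Aset :: "nat \<Rightarrow> ('a::field) ext set" where
  "Aset j = {m. \<forall>S. j \<in> S \<longrightarrow> m S = 0}"

definition Mono :: "nat \<Rightarrow> ('a::field) ext set \<Rightarrow> 'a ext set \<Rightarrow> 'a ext set" where
  "Mono j A B = {a + wedge_e j b | a b. a \<in> A \<and> b \<in> B}"

definition PlusW :: "nat \<Rightarrow> ('a::field) ext set \<Rightarrow> 'a ext set \<Rightarrow> 'a ext set" where
  "PlusW i A B = {a + wedge_e i b | a b. a \<in> A \<and> b \<in> B}"

definition pi_m :: "nat \<Rightarrow> nat \<Rightarrow> ('a::field) ext \<Rightarrow> 'a ext" where
  "pi_m j i m = dec_x j m + wedge_e i (dec_y j m)"

lemma wsign_sq: "wsign h T * wsign h T = (1::'a::field)"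
  by (simp add: wsign_def)

lemma dec_x_add: "dec_x j (a + b) = dec_x j a + dec_x j b"
  by (rule ext) (simp add: dec_x_def)
lemma dec_x_scale: "dec_x j (ext_scale c a) = ext_scale c (dec_x j a)"
  by (rule ext) (simp add: dec_x_def ext_scale_def)
lemma dec_y_add: "dec_y j (a + b) = dec_y j a + dec_y j b"
  by (rule ext) (simp add: dec_y_def algebra_simps)
lemma dec_y_scale: "dec_y j (ext_scale c a) = ext_scale c (dec_y j a)"
  by (rule ext) (simp add: dec_y_def ext_scale_def algebra_simps)
lemma wedge_add: "wedge_e j (a + b) = wedge_e j a + wedge_e j b"
  by (rule ext) (simp add: wedge_e_def algebra_simps)
lemma wedge_scale: "wedge_e j (ext_scale c a) = ext_scale c (wedge_e j a)"
  by (rule ext) (simp add: wedge_e_def ext_scale_def algebra_simps)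
lemma wedge_zero: "wedge_e j 0 = 0"
  by (rule ext) (simp add: wedge_e_def)
lemma dec_y_zero: "dec_y j 0 = 0"
  by (rule ext) (simp add: dec_y_def)
lemma dec_x_zero: "dec_x j 0 = 0"
  by (rule ext) (simp add: dec_x_def)

lemma dec_x_A: "a \<in> Aset j \<Longrightarrow> dec_x j a = a"
  by (rule ext) (auto simp: dec_x_def Aset_def)
lemma dec_y_A: "a \<in> Aset j \<Longrightarrow> dec_y j a = 0"
  by (rule ext) (auto simp: dec_y_def Aset_def)
lemma dec_x_w: "dec_x j (wedge_e j b) = 0"
  by (rule ext) (auto simp: dec_x_def wedge_e_def)
lemma dec_y_w: "b \<in> Aset j \<Longrightarrow> dec_y j (wedge_e j b) = b"
  by (rule ext) (auto simp: dec_y_def wedge_e_def Aset_def wsign_def)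
lemma dec_x_in: "dec_x j m \<in> Aset j"
  by (auto simp: dec_x_def Aset_def)
lemma dec_y_in: "dec_y j m \<in> Aset j"
  by (auto simp: dec_y_def Aset_def)
lemma wedge_i_in: "i \<noteq> j \<Longrightarrow> b \<in> Aset j \<Longrightarrow> wedge_e i b \<in> Aset j"
  by (auto simp: wedge_e_def Aset_def)

lemma pi_add: "pi_m j i (a + b) = pi_m j i a + pi_m j i b"
  by (simp add: pi_m_def dec_x_add dec_y_add wedge_add algebra_simps)
lemma pi_scale: "pi_m j i (ext_scale c a) = ext_scale c (pi_m j i a)"
  by (simp add: pi_m_def dec_x_scale dec_y_scale wedge_scale E.scale_right_distrib)
lemma pi_zero: "pi_m j i 0 = 0"
  by (simp add: pi_m_def dec_x_zero dec_y_zero wedge_zero)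

lemma sub_Aset: "E.subspace (Aset j)"
  by (auto simp: E.subspace_def Aset_def ext_scale_def)

lemma sub_Mono:
  assumes "E.subspace A" "E.subspace B"
  shows "E.subspace (Mono j A B)"
  unfolding E.subspace_def Mono_def
proof (intro conjI ballI allI)
  show "0 \<in> {a + wedge_e j b |a b. a \<in> A \<and> b \<in> B}"
    using assms by (auto simp: wedge_zero intro!: exI[of _ 0] E.subspace_0)
next
  fix x y assume "x \<in> {a + wedge_e j b |a b. a \<in> A \<and> b \<in> B}" "y \<in> {a + wedge_e j b |a b. a \<in> A \<and> b \<in> B}"
  then obtain a b a' b' where "x = a + wedge_e j b" "y = a' + wedge_e j b'" "a \<in> A" "b \<in> B" "a' \<in> A" "b' \<in> B" by auto
  then show "x + y \<in> {a + wedge_e j b |a b. a \<in> A \<and> b \<in> B}"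
  proof -
    have "x + y = (a + a') + wedge_e j (b + b')" using \<open>x = _\<close> \<open>y = _\<close> by (simp add: wedge_add algebra_simps)
    moreover have "a + a' \<in> A" "b + b' \<in> B" using assms \<open>a \<in> A\<close> \<open>a' \<in> A\<close> \<open>b \<in> B\<close> \<open>b' \<in> B\<close> by (auto intro: E.subspace_add)
    ultimately show ?thesis by blast
  qed
next
  fix c x assume "x \<in> {a + wedge_e j b |a b. a \<in> A \<and> b \<in> B}"
  then obtain a b where "x = a + wedge_e j b" "a \<in> A" "b \<in> B" by auto
  then show "ext_scale c x \<in> {a + wedge_e j b |a b. a \<in> A \<and> b \<in> B}"
  proof -
    have "ext_scale c x = ext_scale c a + wedge_e j (ext_scale c b)" using \<open>x = _\<close> by (simp add: wedge_scale E.scale_right_distrib)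
    moreover have "ext_scale c a \<in> A" "ext_scale c b \<in> B" using assms \<open>a \<in> A\<close> \<open>b \<in> B\<close> by (auto intro: E.subspace_scale)
    ultimately show ?thesis by blast
  qed
qed


lemma ss_eq: "slow_shift j i m = (if pi_m j i m \<noteq> 0 then pi_m j i m else wedge_e j (dec_y j m))"
  by (simp add: slow_shift_def pi_m_def Let_def)

lemma sub_img:
  assumes "E.subspace M" shows "E.subspace (pi_m j i ` M)"
  unfolding E.subspace_def
proof (intro conjI ballI allI)
  show "0 \<in> pi_m j i ` M" using assms pi_zero E.subspace_0 by (metis image_eqI)
next
  fix x y assume "x \<in> pi_m j i ` M" "y \<in> pi_m j i ` M"
  then obtain a b where "x = pi_m j i a" "y = pi_m j i b" "a \<in> M" "b \<in> M" by auto
  then show "x + y \<in> pi_m j i ` M" using assms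
    by (metis E.subspace_add image_eqI pi_add)
next
  fix c x assume "x \<in> pi_m j i ` M"
  then obtain a where "x = pi_m j i a" "a \<in> M" by auto
  then show "ext_scale c x \<in> pi_m j i ` M" using assms
    by (metis E.subspace_scale image_eqI pi_scale)
qed

lemma sub_Q:
  assumes "E.subspace M" shows "E.subspace {dec_y j m | m. m \<in> M \<and> pi_m j i m = 0}"
  unfolding E.subspace_def
proof (intro conjI ballI allI)
  show "0 \<in> {dec_y j m | m. m \<in> M \<and> pi_m j i m = 0}"
    using assms pi_zero E.subspace_0 dec_y_zero by (metis (mono_tags, lifting) mem_Collect_eq)
next
  fix x y assume "x \<in> {dec_y j m | m. m \<in> M \<and> pi_m j i m = 0}" "y \<in> {dec_y j m | m. m \<in> M \<and> pi_m j i m = 0}"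
  then obtain a b where "x = dec_y j a" "y = dec_y j b" "a \<in> M" "b \<in> M" "pi_m j i a = 0" "pi_m j i b = 0" by auto
  then have "x + y = dec_y j (a + b) \<and> a + b \<in> M \<and> pi_m j i (a + b) = 0" using assms
    by (simp add: E.subspace_add dec_y_add pi_add)
  then show "x + y \<in> {dec_y j m | m. m \<in> M \<and> pi_m j i m = 0}" by blast
next
  fix c x assume "x \<in> {dec_y j m | m. m \<in> M \<and> pi_m j i m = 0}"
  then obtain a where "x = dec_y j a" "a \<in> M" "pi_m j i a = 0" by auto
  then have "ext_scale c x = dec_y j (ext_scale c a) \<and> ext_scale c a \<in> M \<and> pi_m j i (ext_scale c a) = 0" using assms
    by (simp add: E.subspace_scale dec_y_scale pi_scale E.scale_zero_right)
  then show "ext_scale c x \<in> {dec_y j m | m. m \<in> M \<and> pi_m j i m = 0}" by blast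
qed

lemma MonoI: "a \<in> A \<Longrightarrow> b \<in> B \<Longrightarrow> x = a + wedge_e j b \<Longrightarrow> x \<in> Mono j A B"
  unfolding Mono_def by blast

lemma QI: "m \<in> M \<Longrightarrow> pi_m j i m = 0 \<Longrightarrow> x = dec_y j m \<Longrightarrow> x \<in> {dec_y j m | m. m \<in> M \<and> pi_m j i m = 0}"
  by blast

lemma GI: "m \<in> M \<Longrightarrow> m \<noteq> 0 \<Longrightarrow> x = slow_shift j i m \<Longrightarrow> x \<in> {slow_shift j i m | m. m \<in> M \<and> m \<noteq> 0}"
  by blast

lemma N_general:
  assumes M: "E.subspace M"
  shows "slow_shift_sub j i M = Mono j (pi_m j i ` M) {dec_y j m | m. m \<in> M \<and> pi_m j i m = 0}"
    (is "_ = ?R")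
proof
  have subR: "E.subspace ?R" by (intro sub_Mono sub_img sub_Q M)
  have M0: "0 \<in> M" using M by (rule E.subspace_0)
  show "slow_shift_sub j i M \<subseteq> ?R"
    unfolding slow_shift_sub_def ext_span_def
  proof (rule E.span_minimal[OF _ subR], clarify)
    fix m :: "'a ext" assume m: "m \<in> M" "m \<noteq> 0"
    show "slow_shift j i m \<in> ?R"
    proof (cases "pi_m j i m = 0")
      case True
      have "slow_shift j i m = pi_m j i 0 + wedge_e j (dec_y j m)"
        using True by (simp add: ss_eq pi_zero)
      then show ?thesis
        by (rule MonoI[OF imageI[OF M0] QI[OF m(1) True refl]])
    next
      case False
      have "slow_shift j i m = pi_m j i m + wedge_e j (dec_y j 0)"
        using False by (simp add: ss_eq dec_y_zero wedge_zero)
      then show ?thesis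
        by (rule MonoI[OF imageI[OF m(1)] QI[OF M0 pi_zero refl]])
    qed
  qed
next
  show "?R \<subseteq> slow_shift_sub j i M"
    unfolding slow_shift_sub_def ext_span_def
  proof
    fix r assume "r \<in> ?R"
    then obtain m m' where r: "r = pi_m j i m + wedge_e j (dec_y j m')" and
      mm: "m \<in> M" "m' \<in> M" "pi_m j i m' = 0" unfolding Mono_def by blast
    let ?G = "{slow_shift j i m |m. m \<in> M \<and> m \<noteq> 0}"
    have 1: "pi_m j i m \<in> E.span ?G"
    proof (cases "pi_m j i m = 0")
      case True then show ?thesis by (simp add: E.span_zero)
    next
      case False
      then have "m \<noteq> 0" using pi_zero by metis
      moreover have "pi_m j i m = slow_shift j i m" using False by (simp add: ss_eq)
      ultimately have "pi_m j i m \<in> ?G" by (rule GI[OF mm(1)])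
      then show ?thesis by (rule E.span_base)
    qed
    have 2: "wedge_e j (dec_y j m') \<in> E.span ?G"
    proof (cases "m' = 0")
      case True then show ?thesis by (simp add: E.span_zero dec_y_zero wedge_zero)
    next
      case False
      moreover have "wedge_e j (dec_y j m') = slow_shift j i m'" using mm(3) by (simp add: ss_eq)
      ultimately have "wedge_e j (dec_y j m') \<in> ?G" by (rule GI[OF mm(2)])
      then show ?thesis by (rule E.span_base)
    qed
    show "r \<in> E.span ?G" using 1 2 r by (simp add: E.span_add)
  qed
qed

lemma neg_scale: "ext_scale (-1) x = - (x::'a::field ext)"
  by (rule ext) (simp add: ext_scale_def)

lemma pm_mono:
  assumes "a \<in> Aset j" "b \<in> Aset j"
  shows "pi_m j i (a + wedge_e j b) = a + wedge_e i b" "dec_y j (a + wedge_e j b) = b"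
  using assms by (simp_all add: pi_m_def dec_x_add dec_y_add dec_x_A dec_y_A dec_x_w dec_y_w)

lemma sub_B2:
  assumes "E.subspace A" "E.subspace B"
  shows "E.subspace {b \<in> B. wedge_e i b \<in> A}"
  using assms unfolding E.subspace_def
  by (auto simp: wedge_zero wedge_add wedge_scale)

lemma N_mono:
  assumes ij: "i \<noteq> j" and sA: "E.subspace A" and sB: "E.subspace B"
    and AA: "A \<subseteq> Aset j" and BA: "B \<subseteq> Aset j"
  shows "slow_shift_sub j i (Mono j A B) = Mono j (Mono i A B) {b \<in> B. wedge_e i b \<in> A}"
proof -
  have sM: "E.subspace (Mono j A B)" by (rule sub_Mono[OF sA sB])
  have 1: "pi_m j i ` Mono j A B = Mono i A B"
  proof
    show "pi_m j i ` Mono j A B \<subseteq> Mono i A B"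
      using AA BA by (force simp: Mono_def pm_mono)
    show "Mono i A B \<subseteq> pi_m j i ` Mono j A B"
    proof
      fix x assume "x \<in> Mono i A B"
      then obtain a b where x: "x = a + wedge_e i b" "a \<in> A" "b \<in> B" unfolding Mono_def by blast
      have "a \<in> Aset j" "b \<in> Aset j" using x AA BA by auto
      then have "x = pi_m j i (a + wedge_e j b)" using x(1) by (simp add: pm_mono)
      moreover have "a + wedge_e j b \<in> Mono j A B" using x by (blast intro: MonoI)
      ultimately show "x \<in> pi_m j i ` Mono j A B" by blast
    qed
  qed
  have 2: "{dec_y j m | m. m \<in> Mono j A B \<and> pi_m j i m = 0} = {b \<in> B. wedge_e i b \<in> A}"
  proof
    show "{dec_y j m | m. m \<in> Mono j A B \<and> pi_m j i m = 0} \<subseteq> {b \<in> B. wedge_e i b \<in> A}"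
    proof clarify
      fix m assume "m \<in> Mono j A B" "pi_m j i m = 0"
      then obtain a b where m: "m = a + wedge_e j b" "a \<in> A" "b \<in> B" unfolding Mono_def by blast
      have abA: "a \<in> Aset j" "b \<in> Aset j" using m AA BA by auto
      then have "a + wedge_e i b = 0" using \<open>pi_m j i m = 0\<close> m(1) by (simp add: pm_mono)
      then have "wedge_e i b = ext_scale (-1) a" by (simp add: neg_scale eq_neg_iff_add_eq_0 add.commute)
      then have "wedge_e i b \<in> A" using sA m(2) by (metis E.subspace_scale)
      then show "dec_y j m \<in> B \<and> wedge_e i (dec_y j m) \<in> A" using m abA by (simp add: pm_mono)
    qed
    show "{b \<in> B. wedge_e i b \<in> A} \<subseteq> {dec_y j m | m. m \<in> Mono j A B \<and> pi_m j i m = 0}"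
    proof clarify
      fix b assume b: "b \<in> B" "wedge_e i b \<in> A"
      define a where "a = ext_scale (-1) (wedge_e i b)"
      have aA: "a \<in> A" using sA b unfolding a_def by (metis E.subspace_scale)
      have "a + wedge_e j b \<in> Mono j A B" using aA b by (blast intro: MonoI)
      moreover have "pi_m j i (a + wedge_e j b) = 0" "dec_y j (a + wedge_e j b) = b"
      proof -
        have "a \<in> Aset j" "b \<in> Aset j" using aA b AA BA by auto
        then show "pi_m j i (a + wedge_e j b) = 0" "dec_y j (a + wedge_e j b) = b"
          by (simp_all only: pm_mono) (simp_all add: a_def neg_scale)
      qed
      ultimately show "\<exists>m. b = dec_y j m \<and> m \<in> Mono j A B \<and> pi_m j i m = 0" by metis
    qed
  qed
  show ?thesis using N_general[OF sM] 1 2 by simp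
qed

lemma N_idem:
  assumes ij: "i \<noteq> j" and sA: "E.subspace A" and sB: "E.subspace B"
    and AA: "A \<subseteq> Aset j" and BA: "B \<subseteq> Aset j"
  shows "slow_shift_sub j i (slow_shift_sub j i (Mono j A B)) = slow_shift_sub j i (Mono j A B)"
proof -
  let ?A2 = "Mono i A B" and ?B2 = "{b \<in> B. wedge_e i b \<in> A}"
  have sA2: "E.subspace ?A2" by (rule sub_Mono[OF sA sB])
  have sB2: "E.subspace ?B2" by (rule sub_B2[OF sA sB])
  have AA2: "?A2 \<subseteq> Aset j"
  proof
    fix x assume "x \<in> ?A2"
    then obtain a b where x: "x = a + wedge_e i b" "a \<in> A" "b \<in> B" unfolding Mono_def by blast
    then show "x \<in> Aset j" using AA BA wedge_i_in[OF ij] sub_Aset E.subspace_add by blast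
  qed
  have BA2: "?B2 \<subseteq> Aset j" using BA by blast
  have B0: "0 \<in> B" using sB by (rule E.subspace_0)
  have AsubA2: "A \<subseteq> ?A2"
  proof
    fix a assume "a \<in> A" then show "a \<in> ?A2" using B0 by (intro MonoI[of a A 0]) (auto simp: wedge_zero)
  qed
  have e1: "Mono i ?A2 ?B2 = ?A2"
  proof
    show "Mono i ?A2 ?B2 \<subseteq> ?A2"
    proof
      fix x assume "x \<in> Mono i ?A2 ?B2"
      then obtain y b' where x: "x = y + wedge_e i b'" "y \<in> ?A2" "b' \<in> ?B2" unfolding Mono_def by blast
      then obtain a b where y: "y = a + wedge_e i b" "a \<in> A" "b \<in> B" unfolding Mono_def by blast
      have "x = (a + wedge_e i b') + wedge_e i b" using x y by (simp add: algebra_simps)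
      moreover have "a + wedge_e i b' \<in> A" using x(3) y(2) sA E.subspace_add by blast
      ultimately show "x \<in> ?A2" using y(3) by (blast intro: MonoI)
    qed
    show "?A2 \<subseteq> Mono i ?A2 ?B2"
    proof
      fix x assume "x \<in> ?A2"
      moreover have "0 \<in> ?B2" using sB2 by (rule E.subspace_0)
      moreover have "x = x + wedge_e i 0" by (simp add: wedge_zero)
      ultimately show "x \<in> Mono i ?A2 ?B2" by (rule MonoI)
    qed
  qed
  have e2: "{b \<in> ?B2. wedge_e i b \<in> ?A2} = ?B2" using AsubA2 by blast
  show ?thesis
    using N_mono[OF ij sA sB AA BA] N_mono[OF ij sA2 sB2 AA2 BA2] e1 e2 by simp
qed

lemma omit_iff: "m \<in> ext_pow_omit n j k \<longleftrightarrow> (\<forall>S. \<not> (S \<subseteq> {1..n} \<and> card S = k \<and> j \<notin> S) \<longrightarrow> m S = 0)"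
  unfolding ext_pow_omit_def ext_pow_def by blast

lemma sub_omit: "E.subspace (ext_pow_omit n j k :: 'a::field ext set)"
proof (rule E.subspaceI)
  show "0 \<in> ext_pow_omit n j k" by (simp add: omit_iff)
next
  fix x y :: "'a ext" assume "x \<in> ext_pow_omit n j k" "y \<in> ext_pow_omit n j k"
  then show "x + y \<in> ext_pow_omit n j k" by (simp add: omit_iff)
next
  fix c x assume "(x :: 'a ext) \<in> ext_pow_omit n j k"
  then show "ext_scale c x \<in> ext_pow_omit n j k" by (simp add: omit_iff ext_scale_def)
qed

theorem corollary3p7:
  fixes L :: "('a::field) ext set" and n k i j :: nat
  assumes char: "(2::'a) \<noteq> 0"
    and ij: "1 \<le> i" "i < j" "j \<le> n"
    and sub: "ext_subspace L" "L \<subseteq> ext_pow n k"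
  shows "slow_shift_sub j i (slow_shift_sub j i (slow_shift_sub j i L))
           = slow_shift_sub j i (slow_shift_sub j i L)
         \<and> (monomial_wrt n k j L \<longrightarrow>
              slow_shift_sub j i (slow_shift_sub j i L) = slow_shift_sub j i L)"
proof -
  have ij': "i \<noteq> j" using ij by simp
  have sL: "E.subspace L" using sub(1) by (simp add: ext_subspace_def)
  let ?P = "pi_m j i ` L" and ?Q = "{dec_y j m | m. m \<in> L \<and> pi_m j i m = 0}"
  have NL: "slow_shift_sub j i L = Mono j ?P ?Q" by (rule N_general[OF sL])
  have PA: "?P \<subseteq> Aset j"
  proof
    fix x assume "x \<in> ?P"
    then obtain m where "x = pi_m j i m" by blast
    then show "x \<in> Aset j" unfolding pi_m_def
      using dec_x_in wedge_i_in[OF ij' dec_y_in] sub_Aset E.subspace_add by blast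
  qed
  have QA: "?Q \<subseteq> Aset j" using dec_y_in by blast
  have part1: "slow_shift_sub j i (slow_shift_sub j i (slow_shift_sub j i L))
           = slow_shift_sub j i (slow_shift_sub j i L)"
    unfolding NL by (rule N_idem[OF ij' sub_img[OF sL] sub_Q[OF sL] PA QA])
  have part2: "slow_shift_sub j i (slow_shift_sub j i L) = slow_shift_sub j i L"
    if mono: "monomial_wrt n k j L"
  proof -
    let ?A = "L \<inter> ext_pow_omit n j k" and ?B = "{b \<in> ext_pow_omit n j (k - 1). wedge_e j b \<in> L}"
    have sA: "E.subspace ?A" by (rule E.subspace_inter[OF sL sub_omit])
    have sB: "E.subspace ?B" using sub_omit[of n j "k - 1"] sL
      unfolding E.subspace_def by (auto simp: wedge_zero wedge_add wedge_scale)
    have AA: "?A \<subseteq> Aset j" by (auto simp: ext_pow_omit_def Aset_def)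
    have BA: "?B \<subseteq> Aset j" by (auto simp: ext_pow_omit_def Aset_def)
    have "L = Mono j ?A ?B"
      using mono unfolding monomial_wrt_def Mono_def by blast
    then show ?thesis using N_idem[OF ij' sA sB AA BA] by simp
  qed
  show ?thesis using part1 part2 by blast
qed

end
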